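(* Let $a_{n,k}=|\mathcal{S}_{n,k}^{1\prec n}(1324)|$. For $n\ge3$ and $2\le k\le n-1$, \[ a_{n,k}=\sum_{m=2}^{n-k+1} a_{m,1}\,a_{n-m+1,k-1}. \] Consequently, for every $k\ge1$, $T_{1,k}(x)=x f(x)^k$, and $g_1(x,t)=\dfrac{x t f(x)}{1-t f(x)}$ as formal power series.
   Context: $\mathcal{S}_n(1324)$ denotes the set of permutations of $\{1,\dots,n\}$ (in one-line notation) avoiding the pattern $1324$. For $a,k\ge1$, $\mathcal{S}_{n,k}^{a\prec n}(1324)$ is the set of $\sigma\in\mathcal{S}_n(1324)$ with $\sigma^{-1}(n)-\sigma^{-1}(a)=k$ and $\sigma^{-1}(b)>\sigma^{-1}(n)$ for all $b\in\{1,\dots,a-1\}$. Define $T_{a,k}(x)=\sum_{n\ge k+1}|\mathcal{S}_{n,k}^{a\prec n}(1324)|x^n$ and $g_a(x,t)=\sum_{k\ge1}t^kT_{a,k}(x)$. Let $f(x)=\sum_{n\ge2}a_{n,1}x^{n-1}=x+2x^2+6x^3+22x^4+\cdots$ (so that $T_{1,1}(x)=xf(x)$; its coefficients are the OEIS sequence A000139). *)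

theory Defs
  imports "HOL-Computational_Algebra.Formal_Power_Series"
begin

text \<open>A permutation of {1,...,n} in one-line notation is a list of length n; positions are 0-based
  (only differences of positions matter).\<close>
definition perms :: "nat \<Rightarrow> nat list set" where
  "perms n = {xs. distinct xs \<and> set xs = {1..n}}"

definition avoids1324 :: "nat list \<Rightarrow> bool" where
  "avoids1324 xs \<longleftrightarrow> \<not> (\<exists>i j k l. i < j \<and> j < k \<and> k < l \<and> l < length xs \<and>
      xs ! i < xs ! k \<and> xs ! k < xs ! j \<and> xs ! j < xs ! l)"

definition pos :: "nat list \<Rightarrow> nat \<Rightarrow> nat" where
  "pos xs v = (LEAST i. i < length xs \<and> xs ! i = v)"

definition Sprec :: "nat \<Rightarrow> nat \<Rightarrow> nat \<Rightarrow> nat list set" where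
  "Sprec a n k = {xs \<in> perms n. avoids1324 xs \<and>
      int (pos xs n) - int (pos xs a) = int k \<and>
      (\<forall>b \<in> {1..<a}. pos xs b > pos xs n)}"

definition acnt :: "nat \<Rightarrow> nat \<Rightarrow> nat" where
  "acnt n k = card (Sprec 1 n k)"

definition fser :: "real fps" where
  "fser = Abs_fps (\<lambda>m. if m \<ge> 1 then real (acnt (m + 1) 1) else 0)"

definition Tser :: "nat \<Rightarrow> nat \<Rightarrow> real fps" where
  "Tser a k = Abs_fps (\<lambda>n. if n \<ge> k + 1 then real (card (Sprec a n k)) else 0)"

definition gser :: "nat \<Rightarrow> real fps fps" where
  "gser a = Abs_fps (\<lambda>k. if k \<ge> 1 then Tser a k else 0)"

end

theory Submission
  imports Defs "HOL-Library.Sublist"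
begin


lemma perms_length: "xs \<in> perms n \<Longrightarrow> length xs = n"
  unfolding perms_def using distinct_card by fastforce

lemma pos_nth: "v \<in> set xs \<Longrightarrow> pos xs v < length xs \<and> xs ! pos xs v = v"
proof -
  assume "v \<in> set xs"
  then obtain i where "i < length xs" "xs ! i = v" by (auto simp: in_set_conv_nth)
  then show ?thesis unfolding pos_def by (metis (mono_tags, lifting) LeastI)
qed

lemma pos_unique: "distinct xs \<Longrightarrow> i < length xs \<Longrightarrow> xs ! i = v \<Longrightarrow> pos xs v = i"
  by (metis nth_eq_iff_index_eq nth_mem pos_nth)

lemma pos_app: "distinct (X @ Y) \<Longrightarrow> v \<in> set Y \<Longrightarrow> pos (X @ Y) v = length X + pos Y v"
  by (rule pos_unique) (auto simp: nth_append pos_nth)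

lemma pos_app_left: "distinct (X @ Y) \<Longrightarrow> v \<in> set X \<Longrightarrow> pos (X @ Y) v = pos X v"
  by (rule pos_unique) (auto simp: nth_append pos_nth trans_less_add1)

lemma pos_Cons_self: "pos (v # Y) v = 0"
  unfolding pos_def by (rule Least_equality) auto

lemma pos_map: "inj_on f (set xs) \<Longrightarrow> distinct xs \<Longrightarrow> v \<in> set xs \<Longrightarrow> pos (map f xs) (f v) = pos xs v"
  by (rule pos_unique) (auto simp: pos_nth distinct_map)

definition av :: "nat list \<Rightarrow> bool" where
  "av xs \<longleftrightarrow> \<not> (\<exists>a b c d. subseq [a,b,c,d] xs \<and> a < c \<and> c < b \<and> b < d)"

lemma idx_subseq:
  assumes "i < length xs" "j \<le> i" "subseq ws (drop (Suc i) xs)"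
  shows "subseq (xs ! i # ws) (drop j xs)"
proof -
  have "drop j xs = take (i - j) (drop j xs) @ drop (i - j) (drop j xs)" by (rule append_take_drop_id[symmetric])
  also have "drop (i - j) (drop j xs) = drop i xs" using assms by simp
  also have "drop i xs = xs ! i # drop (Suc i) xs" using assms by (simp add: Cons_nth_drop_Suc)
  finally have e: "drop j xs = take (i - j) (drop j xs) @ (xs ! i # drop (Suc i) xs)" .
  have "subseq (xs ! i # ws) (xs ! i # drop (Suc i) xs)" using assms(3) by simp
  then have "subseq (xs ! i # ws) (take (i - j) (drop j xs) @ (xs ! i # drop (Suc i) xs))"
    by (rule list_emb_append2)
  then show ?thesis by (subst e)
qed

lemma avoids_av: "avoids1324 xs \<longleftrightarrow> av xs"
proof
  assume h: "avoids1324 xs"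
  show "av xs" unfolding av_def
  proof
    assume "\<exists>a b c d. subseq [a,b,c,d] xs \<and> a < c \<and> c < b \<and> b < d"
    then obtain a b c d where s: "subseq [a,b,c,d] xs" and o: "a < c" "c < b" "b < d" by blast
    from list_emb_ConsD[OF s] obtain u1 r1 where x1: "xs = u1 @ a # r1" and s1: "subseq [b,c,d] r1" by auto
    from list_emb_ConsD[OF s1] obtain u2 r2 where x2: "r1 = u2 @ b # r2" and s2: "subseq [c,d] r2" by auto
    from list_emb_ConsD[OF s2] obtain u3 r3 where x3: "r2 = u3 @ c # r3" and s3: "subseq [d] r3" by auto
    from list_emb_ConsD[OF s3] obtain u4 r4 where x4: "r3 = u4 @ d # r4" by auto
    have X: "xs = u1 @ a # u2 @ b # u3 @ c # u4 @ d # r4" using x1 x2 x3 x4 by simp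
    define i where "i = length u1"
    define j where "j = i + 1 + length u2"
    define k where "k = j + 1 + length u3"
    define l where "l = k + 1 + length u4"
    have e: "xs ! i = a" "xs ! j = b" "xs ! k = c" "xs ! l = d" "l < length xs"
      using X by (simp_all add: nth_append i_def j_def k_def l_def)
    have "i < j" "j < k" "k < l" unfolding i_def j_def k_def l_def by simp_all
    then have "\<exists>i j k l. i < j \<and> j < k \<and> k < l \<and> l < length xs \<and>
      xs ! i < xs ! k \<and> xs ! k < xs ! j \<and> xs ! j < xs ! l"
      using e o by (intro exI[of _ i] exI[of _ j] exI[of _ k] exI[of _ l]) simp
    then show False by (rule notE[OF h[unfolded avoids1324_def]])
  qed
next
  assume h: "av xs"
  show "avoids1324 xs" unfolding avoids1324_def
  proof
    assume "\<exists>i j k l. i < j \<and> j < k \<and> k < l \<and> l < length xs \<and>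
      xs ! i < xs ! k \<and> xs ! k < xs ! j \<and> xs ! j < xs ! l"
    then obtain i j k l where o: "i < j" "j < k" "k < l" "l < length xs"
      "xs ! i < xs ! k" "xs ! k < xs ! j" "xs ! j < xs ! l" by blast
    have s1: "subseq [xs ! l] (drop (Suc k) xs)" by (rule idx_subseq) (use o in auto)
    have s2: "subseq [xs ! k, xs ! l] (drop (Suc j) xs)" by (rule idx_subseq[OF _ _ s1]) (use o in auto)
    have s3: "subseq [xs ! j, xs ! k, xs ! l] (drop (Suc i) xs)" by (rule idx_subseq[OF _ _ s2]) (use o in auto)
    have "subseq [xs ! i, xs ! j, xs ! k, xs ! l] (drop 0 xs)" by (rule idx_subseq[OF _ _ s3]) (use o in auto)
    then have "\<exists>a b c d. subseq [a,b,c,d] xs \<and> a < c \<and> c < b \<and> b < d"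
      using o(5-7) by (intro exI[of _ "xs!i"] exI[of _ "xs!j"] exI[of _ "xs!k"] exI[of _ "xs!l"]) simp
    then show False by (rule notE[OF h[unfolded av_def]])
  qed
qed

lemma subseq_set: "subseq xs ys \<Longrightarrow> set xs \<subseteq> set ys"
  by (induction rule: list_emb.induct) auto

lemma av_sub: "subseq ys xs \<Longrightarrow> av xs \<Longrightarrow> av ys"
  unfolding av_def using subseq_order.trans by blast

lemma subseq_map_inv: "subseq ws (map f xs) \<Longrightarrow> \<exists>vs. subseq vs xs \<and> ws = map f vs"
proof (induction xs arbitrary: ws)
  case Nil then show ?case by auto
next
  case (Cons x xs)
  show ?case
  proof (cases ws)
    case Nil then show ?thesis by auto
  next
    case (Cons w ws')
    show ?thesis
    proof (cases "w = f x")
      case True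
      with Cons Cons.prems have "subseq ws' (map f xs)" by simp
      then obtain vs where "subseq vs xs" "ws' = map f vs" using Cons.IH by blast
      then show ?thesis using Cons True by (intro exI[of _ "x # vs"]) auto
    next
      case False
      with Cons Cons.prems have "subseq ws (map f xs)" by simp
      then obtain vs where "subseq vs xs" "ws = map f vs" using Cons.IH by blast
      then show ?thesis by (intro exI[of _ vs]) auto
    qed
  qed
qed

lemma av_map:
  assumes mono: "\<And>x y. x \<in> set xs \<Longrightarrow> y \<in> set xs \<Longrightarrow> x < y \<Longrightarrow> f x < f y"
    and h: "av xs"
  shows "av (map f xs)"
  unfolding av_def
proof
  assume "\<exists>a b c d. subseq [a,b,c,d] (map f xs) \<and> a < c \<and> c < b \<and> b < d"
  then obtain a b c d where s: "subseq [a,b,c,d] (map f xs)" and o: "a < c" "c < b" "b < d" by blast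
  obtain vs where v': "subseq vs xs \<and> [a,b,c,d] = map f vs" using subseq_map_inv[OF s] by (rule exE)
  then have v: "subseq vs xs" "[a,b,c,d] = map f vs" by auto
  have "length vs = 4" using arg_cong[OF v(2), of length] by simp
  then obtain a' b' c' d' where vs: "vs = [a',b',c',d']"
    by (auto simp: length_Suc_conv numeral_eq_Suc)
  have e: "a = f a'" "b = f b'" "c = f c'" "d = f d'" using v(2) vs by simp_all
  have S: "a' \<in> set xs" "b' \<in> set xs" "c' \<in> set xs" "d' \<in> set xs"
    using subseq_set[OF v(1)] vs by auto
  have r: "\<And>x y. x \<in> set xs \<Longrightarrow> y \<in> set xs \<Longrightarrow> f x < f y \<Longrightarrow> x < y"
  proof -
    fix x y assume "x \<in> set xs" "y \<in> set xs" "f x < f y"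
    then show "x < y" using mono[of y x] by (cases "x < y"; cases "x = y") auto
  qed
  have "a' < c'" using r[OF S(1) S(3)] o e by simp
  moreover have "c' < b'" using r[OF S(3) S(2)] o e by simp
  moreover have "b' < d'" using r[OF S(2) S(4)] o e by simp
  moreover have "subseq [a',b',c',d'] xs" using v(1) vs by simp
  ultimately have "\<exists>a b c d. subseq [a,b,c,d] xs \<and> a < c \<and> c < b \<and> b < d"
    by (intro exI[of _ a'] exI[of _ b'] exI[of _ c'] exI[of _ d']) simp
  then show False by (rule notE[OF h[unfolded av_def]])
qed

lemma split_filter:
  "(\<And>x y. subseq [x,y] xs \<Longrightarrow> \<not> Q x \<Longrightarrow> \<not> Q y) \<Longrightarrow> xs = filter Q xs @ filter (\<lambda>x. \<not> Q x) xs"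
proof (induction xs)
  case Nil then show ?case by simp
next
  case (Cons z xs)
  have h: "\<And>x y. subseq [x,y] xs \<Longrightarrow> \<not> Q x \<Longrightarrow> \<not> Q y"
    using Cons.prems by (meson list_emb_Cons)
  show ?case
  proof (cases "Q z")
    case True then show ?thesis using Cons.IH[OF h] by simp
  next
    case False
    have "\<forall>y\<in>set xs. \<not> Q y"
    proof
      fix y assume "y \<in> set xs"
      then have "subseq [z,y] (z # xs)" by (simp add: subseq_singleton_left)
      then show "\<not> Q y" using Cons.prems False by blast
    qed
    then show ?thesis using False by (simp add: filter_True filter_False)
  qed
qed



lemma avD: assumes "av xs" "subseq [a,b,c,d] xs" "a < c" "c < b" "b < d" shows False
proof -
  have "\<exists>a b c d. subseq [a,b,c,d] xs \<and> a < c \<and> c < b \<and> b < d"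
    using assms(2-) by (intro exI[of _ a] exI[of _ b] exI[of _ c] exI[of _ d]) simp
  then show False by (rule notE[OF assms(1)[unfolded av_def]])
qed

lemma avI: assumes "\<And>a b c d. subseq [a,b,c,d] xs \<Longrightarrow> a < c \<Longrightarrow> c < b \<Longrightarrow> b < d \<Longrightarrow> False"
  shows "av xs"
  unfolding av_def using assms by auto

lemma empty_if: "(\<And>y. y \<in> set w \<Longrightarrow> False) \<Longrightarrow> w = []"
  by (cases w) auto

lemma split4_cases:
  fixes a b c d m :: nat
  assumes W: "[a,b,c,d] = w1 @ w2 @ w3 @ w4"
    and s1: "\<forall>x\<in>set w1. m \<le> x" and s2: "\<forall>x\<in>set w2. x < m"
    and s3: "\<forall>x\<in>set w3. m \<le> x" and s4: "\<forall>x\<in>set w4. x < m"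
    and o: "a < c" "c < b" "b < d"
  shows "(w2 = [] \<and> w4 = []) \<or> (w1 = [] \<and> w3 = []) \<or>
         (w1 = [] \<and> w2 = [a,b,c] \<and> w3 = [d] \<and> w4 = []) \<or>
         (w1 = [] \<and> w2 = [a] \<and> w3 = [b,c,d] \<and> w4 = [])"
proof -
  have S: "set w1 \<union> set w2 \<union> set w3 \<union> set w4 = {a,b,c,d}"
    using arg_cong[OF W, of set] by auto
  have h1: "w1 = [] \<or> (w2 = [] \<and> w4 = [])"
  proof (cases w1)
    case (Cons x r)
    then have "a = x" using W by simp
    then have "m \<le> a" using s1 Cons by simp
    then have all: "\<forall>y\<in>{a,b,c,d}. m \<le> y" using o by auto
    have "w2 = []"
    proof (rule empty_if)
      fix y assume y: "y \<in> set w2"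
      then have "y \<in> {a,b,c,d}" using S by blast
      then have "m \<le> y" using all by blast
      then show False using s2 y by auto
    qed
    moreover have "w4 = []"
    proof (rule empty_if)
      fix y assume y: "y \<in> set w4"
      then have "y \<in> {a,b,c,d}" using S by blast
      then have "m \<le> y" using all by blast
      then show False using s4 y by auto
    qed
    ultimately show ?thesis by simp
  qed simp
  have h4: "w4 = [] \<or> (w1 = [] \<and> w3 = [])"
  proof (cases w4 rule: rev_cases)
    case (snoc r x)
    then have "last [a,b,c,d] = x" using W by simp
    then have "d < m" using s4 snoc by simp
    then have all: "\<forall>y\<in>{a,b,c,d}. y < m" using o by auto
    have "w1 = []"
    proof (rule empty_if)
      fix y assume y: "y \<in> set w1"
      then have "y \<in> {a,b,c,d}" using S by blast
      then have "y < m" using all by blast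
      then show False using s1 y by auto
    qed
    moreover have "w3 = []"
    proof (rule empty_if)
      fix y assume y: "y \<in> set w3"
      then have "y \<in> {a,b,c,d}" using S by blast
      then have "y < m" using all by blast
      then show False using s3 y by auto
    qed
    ultimately show ?thesis by simp
  qed simp
  show ?thesis
  proof (cases "w1 = [] \<and> w4 = [] \<and> w2 \<noteq> [] \<and> w3 \<noteq> []")
    case True
    then have W': "[a,b,c,d] = w2 @ w3" using W by simp
    have "(w2 = [a,b,c] \<and> w3 = [d]) \<or> (w2 = [a] \<and> w3 = [b,c,d])"
      using W' True s2 s3 o by (auto simp: Cons_eq_append_conv)
    then show ?thesis using True by auto
  next
    case False
    then show ?thesis using h1 h4 by auto
  qed
qed

lemma av_comb:
  fixes m :: nat
  assumes X: "\<forall>x\<in>set X. m \<le> x" and Y: "\<forall>x\<in>set Y. m < x"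
    and E: "\<forall>x\<in>set E. x < m" and D: "\<forall>x\<in>set D. x < m"
    and a1: "av (E @ m # D)" and a2: "av (X @ m # Y)"
  shows "av (X @ E @ (m # Y) @ D)"
proof (rule avI)
  fix a b c d assume s: "subseq [a,b,c,d] (X @ E @ (m # Y) @ D)" and o: "a < c" "c < b" "b < d"
  obtain w1 r1 where e1: "[a,b,c,d] = w1 @ r1" and t1: "subseq w1 X" and u1: "subseq r1 (E @ (m#Y) @ D)"
    using s by (rule subseq_appendE)
  obtain w2 r2 where e2: "r1 = w2 @ r2" and t2: "subseq w2 E" and u2: "subseq r2 ((m#Y) @ D)"
    using u1 by (rule subseq_appendE)
  obtain w3 w4 where e3: "r2 = w3 @ w4" and t3: "subseq w3 (m#Y)" and t4: "subseq w4 D"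
    using u2 by (rule subseq_appendE)
  have W: "[a,b,c,d] = w1 @ w2 @ w3 @ w4" using e1 e2 e3 by simp
  have s1: "\<forall>x\<in>set w1. m \<le> x" using subseq_set[OF t1] X by auto
  have s2: "\<forall>x\<in>set w2. x < m" using subseq_set[OF t2] E by auto
  have s3: "\<forall>x\<in>set w3. m \<le> x" using subseq_set[OF t3] Y by force
  have s4: "\<forall>x\<in>set w4. x < m" using subseq_set[OF t4] D by auto
  have DmD: "subseq D (m # D)" by (simp add: list_emb_Cons)
  consider "w2 = [] \<and> w4 = []" | "w1 = [] \<and> w3 = []" |
         "w1 = [] \<and> w2 = [a,b,c] \<and> w3 = [d] \<and> w4 = []" |
         "w1 = [] \<and> w2 = [a] \<and> w3 = [b,c,d] \<and> w4 = []"
    using split4_cases[OF W s1 s2 s3 s4 o] by argo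
  then show False
  proof cases
    case 1
    then have "subseq [a,b,c,d] (X @ (m # Y))" using W t1 t3 by (simp add: list_emb_append_mono)
    then show False by (rule avD[OF a2 _ o])
  next
    case 2
    then have "subseq [a,b,c,d] (E @ D)" using W t2 t4 by (simp add: list_emb_append_mono)
    moreover have "subseq (E @ D) (E @ (m # D))" using DmD by (simp add: subseq_append')
    ultimately have "subseq [a,b,c,d] (E @ (m # D))" by (rule subseq_order.trans)
    then show False by (rule avD[OF a1 _ o])
  next
    case 3
    then have "d \<in> set (m # Y)" using subseq_set[OF t3] by auto
    have "b < m" using 3 s2 by simp
    have "subseq ([a,b,c] @ [m]) (E @ (m # D))" using 3 t2 by (intro list_emb_append_mono) auto
    then have "subseq [a,b,c,m] (E @ (m # D))" by simp
    then show False by (rule avD[OF a1 _ o(1,2) \<open>b < m\<close>])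
  next
    case 4
    then have t: "subseq [b,c,d] (m # Y)" using t3 by simp
    have "c \<in> set (m # Y)" using subseq_set[OF t] by auto
    then have "m \<le> c" using Y by auto
    then have "b \<noteq> m" using o by simp
    then have t': "subseq [b,c,d] Y" using t by simp
    then have "c \<in> set Y" using subseq_set[OF t'] by auto
    then have "m < c" using Y by auto
    have "subseq [m,b,c,d] (m # Y)" using t' by simp
    then have "subseq [m,b,c,d] (X @ m # Y)" by (rule list_emb_append2)
    then show False by (rule avD[OF a2 _ \<open>m < c\<close> o(2,3)])
  qed
qed



definition comb :: "nat \<Rightarrow> nat list \<Rightarrow> nat list \<Rightarrow> nat list \<Rightarrow> nat list \<Rightarrow> nat list" where
  "comb m A B C D = map (\<lambda>x. x + (m - 1)) A @ B @ [1] @ map (\<lambda>x. x + (m - 1)) (1 # C) @ D"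

definition Fm :: "nat \<Rightarrow> nat list \<Rightarrow> nat \<times> nat list \<times> nat list" where
  "Fm n \<sigma> = (let c = \<sigma> ! Suc (pos \<sigma> 1) in
     (c, map (\<lambda>y. if y = n then c else y) (filter (\<lambda>y. y < c \<or> y = n) \<sigma>),
      map (\<lambda>y. y - (c - 1)) (filter (\<lambda>y. c \<le> y) \<sigma>)))"

lemma pos_first: "v \<notin> set A \<Longrightarrow> pos (A @ v # B) v = length A"
  unfolding pos_def
proof (rule Least_equality)
  show "length A < length (A @ v # B) \<and> (A @ v # B) ! length A = v" by simp
next
  fix y assume "v \<notin> set A" "y < length (A @ v # B) \<and> (A @ v # B) ! y = v"
  then show "length A \<le> y" by (metis nth_append nth_mem not_le)
qed

lemma filter_eq_single: "distinct xs \<Longrightarrow> v \<in> set xs \<Longrightarrow> filter (\<lambda>y. y = v) xs = [v]"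
proof -
  assume d: "distinct xs" and v: "v \<in> set xs"
  obtain u w where xs: "xs = u @ v # w" using split_list[OF v] by (elim exE)
  have "v \<notin> set u" "v \<notin> set w" using d xs by auto
  then have "filter (\<lambda>y. y = v) u = []" "filter (\<lambda>y. y = v) w = []" by (auto simp: filter_empty_conv)
  then show ?thesis unfolding xs by simp
qed

lemma sprecD:
  assumes "xs \<in> Sprec 1 n k"
  shows "distinct xs" "set xs = {1..n}" "length xs = n" "av xs"
    "int (pos xs n) - int (pos xs 1) = int k"
  using assms perms_length[of xs n] unfolding Sprec_def perms_def by (auto simp: avoids_av)

lemma comb_props:
  fixes m n k :: nat
  assumes m2: "2 \<le> m" and k2: "2 \<le> k" and mn: "m \<le> n - k + 1"
    and ha: "B @ 1 # m # D \<in> Sprec 1 m 1" and hb: "A @ 1 # C \<in> Sprec 1 (n - m + 1) (k - 1)"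
  shows "comb m A B C D \<in> Sprec 1 n k \<and> Fm n (comb m A B C D) = (m, B @ 1 # m # D, A @ 1 # C)"
proof -
  define s where "s = (\<lambda>x::nat. x + (m - 1))"
  define n' where "n' = n - m + 1"
  have nk: "k + 1 \<le> n" using mn m2 by arith
  have nn'2: "m \<le> n" using mn nk m2 k2 by arith
  have nn'1: "n = n' + m - 1" using nn'2 unfolding n'_def by arith
  note nn' = nn'1 nn'2
  have n'2: "k \<le> n'" using mn nk unfolding n'_def by arith
  note a = sprecD[OF ha] and b = sprecD[OF hb, folded n'_def]
  have Bv: "\<forall>x\<in>set B. 2 \<le> x \<and> x < m" and Dv: "\<forall>x\<in>set D. 2 \<le> x \<and> x < m"
  proof -
    have "set B \<subseteq> {1..m}" "set D \<subseteq> {1..m}" using a(2) by auto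
    moreover have "1 \<notin> set B" "m \<notin> set B" "1 \<notin> set D" "m \<notin> set D" using a(1) by auto
    ultimately show "\<forall>x\<in>set B. 2 \<le> x \<and> x < m" "\<forall>x\<in>set D. 2 \<le> x \<and> x < m"
      by (auto simp: subset_iff) (metis One_nat_def Suc_1 atLeastAtMost_iff le_antisym not_less_eq_eq order_le_neq_trans)+
  qed
  have pb1: "pos (A @ 1 # C) 1 = length A" using b(1) by (intro pos_first) auto
  have n'C: "n' \<in> set C"
  proof -
    have "n' \<in> set (A @ 1 # C)" using b(2) n'2 k2 by auto
    moreover have "n' \<noteq> 1" using n'2 k2 by simp
    moreover have "n' \<notin> set A"
    proof
      assume "n' \<in> set A"
      have "pos (A @ 1 # C) n' = pos A n'" using b(1) \<open>n' \<in> set A\<close> by (rule pos_app_left)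
      also have "\<dots> < length A" using pos_nth[OF \<open>n' \<in> set A\<close>] by simp
      finally show False using b(5) pb1 k2 by arith
    qed
    ultimately show ?thesis by simp
  qed
  have pC: "pos C n' = k - 2"
  proof -
    have "pos ((A @ [1]) @ C) n' = length (A @ [1]) + pos C n'"
      by (rule pos_app) (use b(1) n'C in auto)
    then have "pos (A @ 1 # C) n' = length A + 1 + pos C n'" by simp
    then show ?thesis using b(5) pb1 k2 by arith
  qed
  have Av: "\<forall>x\<in>set A. 2 \<le> x \<and> x < n'" and Cv: "\<forall>x\<in>set C. 2 \<le> x \<and> x \<le> n'"
  proof -
    have "set A \<subseteq> {1..n'}" "set C \<subseteq> {1..n'}" using b(2) by auto
    moreover have "1 \<notin> set A" "n' \<notin> set A" "1 \<notin> set C" using b(1) n'C by auto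
    ultimately show "\<forall>x\<in>set A. 2 \<le> x \<and> x < n'" "\<forall>x\<in>set C. 2 \<le> x \<and> x \<le> n'"
      by (auto simp: subset_iff) (metis One_nat_def Suc_1 atLeastAtMost_iff le_antisym not_less_eq_eq order_le_neq_trans)+
  qed
  define \<sigma> where "\<sigma> = comb m A B C D"
  have s1: "s 1 = m" unfolding s_def using m2 by simp
  have \<sigma>e: "\<sigma> = map s A @ B @ 1 # m # map s C @ D"
    unfolding \<sigma>_def comb_def s_def[symmetric] using s1 by simp
  have inj: "inj s" unfolding s_def inj_def by simp
  have sAv: "\<forall>x\<in>set (map s A). m < x \<and> x < n" using Av nn' m2 unfolding s_def by auto
  have sCv: "\<forall>x\<in>set (map s C). m < x \<and> x \<le> n" using Cv nn' m2 unfolding s_def by auto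
  have nC: "n \<in> set (map s C)" using n'C nn' m2 unfolding s_def by force
  have dAC: "set A \<inter> set C = {}" "distinct A" "distinct C" using b(1) by auto
  have dBD: "set B \<inter> set D = {}" "distinct B" "distinct D" using a(1) by auto
  have dsAC: "set (map s A) \<inter> set (map s C) = {}" using dAC inj by (simp add: image_Int[symmetric] inj_on_def)
  have dist: "distinct \<sigma>"
    unfolding \<sigma>e using sAv sCv Bv Dv dAC dBD dsAC inj m2
    by (auto simp: distinct_map inj_on_def; fastforce)
  have sv: "set \<sigma> = {1..n}"
  proof -
    have "set \<sigma> = s ` set (A @ 1 # C) \<union> set (B @ 1 # m # D)" unfolding \<sigma>e using s1 by auto
    also have "s ` set (A @ 1 # C) = {1 + (m - 1)..n' + (m - 1)}"
      unfolding b(2) s_def by (rule image_add_atLeastAtMost')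
    also have "{1 + (m - 1)..n' + (m - 1)} = {m..n}" using nn' m2 by simp
    also have "{m..n} \<union> set (B @ 1 # m # D) = {1..n}" unfolding a(2) using nn' m2 by auto
    finally show ?thesis .
  qed
  have avs: "av \<sigma>"
  proof -
    have "av (map s A @ (B @ [1]) @ (m # map s C) @ D)"
    proof (rule av_comb)
      show "av ((B @ [1]) @ m # D)" using a(4) by simp
      have "av (map s (A @ 1 # C))" by (rule av_map[OF _ b(4)]) (simp add: s_def)
      then show "av (map s A @ m # map s C)" using s1 by simp
    qed (use sAv sCv Bv Dv m2 in auto)
    then show ?thesis unfolding \<sigma>e by simp
  qed
  have p1: "pos \<sigma> 1 = length A + length B"
  proof -
    have "pos ((map s A @ B) @ 1 # (m # map s C @ D)) 1 = length (map s A @ B)"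
      by (rule pos_first) (use sAv Bv m2 in auto)
    then show ?thesis unfolding \<sigma>e by simp
  qed
  have pn: "pos \<sigma> n = length A + length B + k"
  proof -
    have d2: "distinct ((map s A @ B @ [1, m]) @ (map s C @ D))" using dist unfolding \<sigma>e by simp
    have "pos ((map s A @ B @ [1, m]) @ (map s C @ D)) n = length (map s A @ B @ [1, m]) + pos (map s C @ D) n"
      by (rule pos_app[OF d2]) (use nC in simp)
    also have "pos (map s C @ D) n = pos (map s C) n"
      by (rule pos_app_left) (use d2 nC in auto)
    also have "\<dots> = pos (map s C) (s n')" using nn' m2 unfolding s_def by (metis add.commute add_diff_assoc2 one_le_numeral order.trans)
    also have "\<dots> = pos C n'" by (rule pos_map) (use inj dAC n'C in \<open>auto simp: inj_on_def\<close>)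
    finally show ?thesis unfolding \<sigma>e using pC k2 by simp
  qed
  have mem: "\<sigma> \<in> Sprec 1 n k"
    unfolding Sprec_def perms_def using dist sv avs p1 pn by (auto simp: avoids_av)
  have c: "\<sigma> ! Suc (pos \<sigma> 1) = m"
  proof -
    have "\<sigma> ! Suc (pos \<sigma> 1) = \<sigma> ! length (map s A @ B @ [1])" using p1 by simp
    also have "\<dots> = m" unfolding \<sigma>e by (simp add: nth_append)
    finally show ?thesis .
  qed
  have mn': "m < n" using mn k2 nk by arith
  have f1: "filter (\<lambda>y. y < m \<or> y = n) \<sigma> = B @ 1 # n # D"
  proof -
    have "filter (\<lambda>y. y < m \<or> y = n) (map s A) = []" using sAv by (auto simp: filter_empty_conv)
    moreover have "filter (\<lambda>y. y < m \<or> y = n) B = B" using Bv by (auto intro: filter_True)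
    moreover have "filter (\<lambda>y. y < m \<or> y = n) D = D" using Dv by (auto intro: filter_True)
    moreover have "filter (\<lambda>y. y < m \<or> y = n) (map s C) = [n]"
    proof -
      have "filter (\<lambda>y. y < m \<or> y = n) (map s C) = filter (\<lambda>y. y = n) (map s C)"
        using sCv by (intro filter_cong) auto
      also have "\<dots> = [n]" by (rule filter_eq_single) (use dist nC in \<open>auto simp: \<sigma>e\<close>)
      finally show ?thesis .
    qed
    ultimately show ?thesis unfolding \<sigma>e using m2 mn' by simp
  qed
  have g1: "map (\<lambda>y. if y = n then m else y) (B @ 1 # n # D) = B @ 1 # m # D"
  proof -
    have "map (\<lambda>y. if y = n then m else y) B = B" using Bv mn' by (intro map_idI) auto
    moreover have "map (\<lambda>y. if y = n then m else y) D = D" using Dv mn' by (intro map_idI) auto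
    ultimately show ?thesis using mn' m2 by simp
  qed
  have f2: "filter (\<lambda>y. m \<le> y) \<sigma> = map s A @ m # map s C"
  proof -
    have "filter (\<lambda>y. m \<le> y) (map s A) = map s A" by (rule filter_True) (use sAv in force)
    moreover have "filter (\<lambda>y. m \<le> y) (map s C) = map s C" by (rule filter_True) (use sCv in force)
    moreover have "filter (\<lambda>y. m \<le> y) B = []" using Bv by (auto simp: filter_empty_conv)
    moreover have "filter (\<lambda>y. m \<le> y) D = []" using Dv by (auto simp: filter_empty_conv)
    ultimately show ?thesis unfolding \<sigma>e using m2 by simp
  qed
  have g2: "map (\<lambda>y. y - (m - 1)) (map s A @ m # map s C) = A @ 1 # C"
    unfolding s_def using m2 by (simp add: map_idI)
  have "Fm n \<sigma> = (m, B @ 1 # m # D, A @ 1 # C)"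
    unfolding Fm_def Let_def c f1 g1 f2 g2 by simp
  then show ?thesis using mem unfolding \<sigma>_def by simp
qed



lemma decomp:
  fixes n k :: nat
  assumes hs: "\<sigma> \<in> Sprec 1 n k" and k2: "2 \<le> k"
  shows "\<exists>m A B C D. \<sigma> = comb m A B C D \<and> m \<in> {2..n - k + 1} \<and>
           B @ 1 # m # D \<in> Sprec 1 m 1 \<and> A @ 1 # C \<in> Sprec 1 (n - m + 1) (k - 1)"
proof -
  note h = sprecD[OF hs]
  have n1: "1 \<le> n"
  proof (rule ccontr)
    assume "\<not> 1 \<le> n"
    then have "n = 0" by simp
    then have "\<sigma> = []" using h(3) by simp
    then have "pos \<sigma> n = pos \<sigma> 1" by (simp add: pos_def)
    then show False using h(5) k2 by simp
  qed
  have in1: "1 \<in> set \<sigma>" and inn: "n \<in> set \<sigma>" using h(2) n1 by auto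
  define p where "p = pos \<sigma> 1"
  define q where "q = pos \<sigma> n"
  have pp: "p < n" "\<sigma> ! p = 1" using pos_nth[OF in1] h(3) unfolding p_def by auto
  have qq: "q < n" "\<sigma> ! q = n" using pos_nth[OF inn] h(3) unfolding q_def by auto
  have qpk: "q = p + k" using h(5) unfolding p_def q_def by arith
  define P where "P = take p \<sigma>"
  define c where "c = \<sigma> ! Suc p"
  define R where "R = drop (Suc (Suc p)) \<sigma>"
  have \<sigma>e0: "\<sigma> = P @ 1 # c # R"
  proof -
    have "\<sigma> = take p \<sigma> @ drop p \<sigma>" by simp
    also have "drop p \<sigma> = \<sigma> ! p # drop (Suc p) \<sigma>" using pp h(3) Cons_nth_drop_Suc[of p \<sigma>] by simp
    also have "drop (Suc p) \<sigma> = \<sigma> ! Suc p # drop (Suc (Suc p)) \<sigma>"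
      using qq qpk k2 h(3) Cons_nth_drop_Suc[of "Suc p" \<sigma>] by simp
    finally show ?thesis unfolding P_def c_def R_def using pp by simp
  qed
  have lenP: "length P = p" unfolding P_def using pp h(3) by simp
  have nR: "n \<in> set R"
  proof -
    have e: "Suc (Suc p) + (q - Suc (Suc p)) = q" using qpk k2 by simp
    have "R ! (q - Suc (Suc p)) = \<sigma> ! (Suc (Suc p) + (q - Suc (Suc p)))" unfolding R_def using qq qpk k2 h(3) by simp
    then have "R ! (q - Suc (Suc p)) = \<sigma> ! q" unfolding e .
    moreover have "q - Suc (Suc p) < length R" unfolding R_def using qq qpk k2 h(3) by simp
    ultimately show ?thesis using qq nth_mem by metis
  qed
  have ds: "distinct (P @ 1 # c # R)" using h(1) \<sigma>e0 by simp
  have vals: "\<forall>x\<in>set \<sigma>. 1 \<le> x \<and> x \<le> n" using h(2) by auto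
  have dd: "1 \<notin> set P" "c \<notin> set P" "1 \<noteq> c" "1 \<notin> set R" "c \<notin> set R" "set P \<inter> set R = {}"
    using ds by auto
  have cin: "c \<in> set \<sigma>" unfolding \<sigma>e0 by simp
  have c1n: "1 \<le> c" "c \<le> n" using vals cin by auto
  have c2: "2 \<le> c" using c1n dd(3) by simp
  have "c \<noteq> n" using dd(5) nR by auto
  then have cn: "c < n" using c1n by simp
  have avs: "av (P @ 1 # c # R)" using h(4) \<sigma>e0 by simp
  have S1: "P = filter (\<lambda>y. c \<le> y) P @ filter (\<lambda>y. y < c) P"
  proof -
    have "P = filter (\<lambda>y. c \<le> y) P @ filter (\<lambda>y. \<not> c \<le> y) P"
    proof (rule split_filter)
      fix x y assume sxy: "subseq [x,y] P" and x: "\<not> c \<le> x"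
      show "\<not> c \<le> y"
      proof
        assume y: "c \<le> y"
        have yP: "y \<in> set P" using subseq_set[OF sxy] by simp
        have "y \<noteq> c" using yP dd(2) by auto
        moreover have "y \<noteq> n" using yP nR dd(6) by auto
        moreover have "y \<le> n" using yP vals unfolding \<sigma>e0 by simp
        ultimately have cy: "c < y" "y < n" using y by auto
        have "subseq [c,n] (1 # c # R)" using nR by (simp add: subseq_singleton_left)
        then have "subseq ([x,y] @ [c,n]) (P @ 1 # c # R)" using sxy by (rule list_emb_append_mono[rotated])
        then have "subseq [x,y,c,n] (P @ 1 # c # R)" by simp
        then show False by (rule avD[OF avs]) (use x cy in auto)
      qed
    qed
    then show ?thesis by (simp add: not_le)
  qed
  have S2: "R = filter (\<lambda>y. c \<le> y) R @ filter (\<lambda>y. y < c) R"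
  proof -
    have "R = filter (\<lambda>y. c \<le> y) R @ filter (\<lambda>y. \<not> c \<le> y) R"
    proof (rule split_filter)
      fix x y assume sxy: "subseq [x,y] R" and x: "\<not> c \<le> x"
      show "\<not> c \<le> y"
      proof
        assume y: "c \<le> y"
        have xR: "x \<in> set R" and yR: "y \<in> set R" using subseq_set[OF sxy] by auto
        have "y \<noteq> c" using yR dd(5) by auto
        then have cy: "c < y" using y by simp
        have "x \<noteq> 1" using xR dd(4) by auto
        moreover have "1 \<le> x" using xR vals unfolding \<sigma>e0 by simp
        ultimately have x1: "1 < x" by simp
        have "subseq [1,c] (P @ [1,c])" by (rule list_emb_append2) simp
        then have "subseq ([1,c] @ [x,y]) ((P @ [1,c]) @ R)" using sxy by (rule list_emb_append_mono)
        then have "subseq [1,c,x,y] (P @ 1 # c # R)" by simp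
        then show False by (rule avD[OF avs]) (use x cy x1 in auto)
      qed
    qed
    then show ?thesis by (simp add: not_le)
  qed
  define A' where "A' = filter (\<lambda>y. c \<le> y) P"
  define B where "B = filter (\<lambda>y. y < c) P"
  define C0 where "C0 = filter (\<lambda>y. c \<le> y) R"
  define D where "D = filter (\<lambda>y. y < c) R"
  have \<sigma>e: "\<sigma> = A' @ B @ 1 # c # C0 @ D"
    using \<sigma>e0 S1 S2 unfolding A'_def B_def C0_def D_def by (metis append.assoc append_Cons)
  have ds2: "distinct (A' @ B @ 1 # c # C0 @ D)" using h(1) \<sigma>e by simp
  have vals2: "\<forall>x\<in>set (A' @ B @ 1 # c # C0 @ D). 1 \<le> x \<and> x \<le> n" using vals \<sigma>e by simp
  have Av: "\<forall>y\<in>set A'. c < y \<and> y \<le> n"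
  proof
    fix y assume y: "y \<in> set A'"
    then have "c \<le> y" "y \<noteq> c" "y \<le> n" using ds2 vals2 unfolding A'_def by auto
    then show "c < y \<and> y \<le> n" by simp
  qed
  have Cv: "\<forall>y\<in>set C0. c < y \<and> y \<le> n"
  proof
    fix y assume y: "y \<in> set C0"
    then have "c \<le> y" "y \<noteq> c" "y \<le> n" using ds2 vals2 unfolding C0_def by auto
    then show "c < y \<and> y \<le> n" by simp
  qed
  have Bv: "\<forall>y\<in>set B. 2 \<le> y \<and> y < c"
  proof
    fix y assume y: "y \<in> set B"
    then have "y < c" "y \<noteq> 1" "1 \<le> y" using ds2 vals2 unfolding B_def by auto
    then show "2 \<le> y \<and> y < c" by simp
  qed
  have Dv: "\<forall>y\<in>set D. 2 \<le> y \<and> y < c"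
  proof
    fix y assume y: "y \<in> set D"
    then have "y < c" "y \<noteq> 1" "1 \<le> y" using ds2 vals2 unfolding D_def by auto
    then show "2 \<le> y \<and> y < c" by simp
  qed
  have nC: "n \<in> set C0" using nR cn unfolding C0_def by simp
  define hh where "hh = (\<lambda>y::nat. y - (c - 1))"
  define ss where "ss = (\<lambda>x::nat. x + (c - 1))"
  define A where "A = map hh A'"
  define C where "C = map hh C0"
  have mA: "map ss A = A'" unfolding A_def ss_def hh_def map_map by (rule map_idI) (use Av c2 in auto)
  have mC: "map ss C = C0" unfolding C_def ss_def hh_def map_map by (rule map_idI) (use Cv c2 in auto)
  have combe: "\<sigma> = comb c A B C D"
  proof -
    have "comb c A B C D = map ss A @ B @ [1] @ map ss (1 # C) @ D" unfolding comb_def ss_def by (rule refl)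
    also have "map ss (1 # C) = c # C0" using mC c2 by (simp add: ss_def)
    finally show ?thesis unfolding mA \<sigma>e by simp
  qed
  have setall: "set (A' @ B @ 1 # c # C0 @ D) = {1..n}" using h(2) \<sigma>e by simp
  have alpha: "B @ 1 # c # D \<in> Sprec 1 c 1"
  proof -
    have d: "distinct (B @ 1 # c # D)" using ds2 by auto
    have st: "set (B @ 1 # c # D) = {1..c}"
    proof
      show "set (B @ 1 # c # D) \<subseteq> {1..c}" using Bv Dv c2 by auto
      show "{1..c} \<subseteq> set (B @ 1 # c # D)"
      proof
        fix y assume y: "y \<in> {1..c}"
        then have "y \<in> set (A' @ B @ 1 # c # C0 @ D)" unfolding setall using cn by auto
        moreover have "y \<notin> set A'" "y \<notin> set C0" using y Av Cv by auto
        ultimately show "y \<in> set (B @ 1 # c # D)" by auto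
      qed
    qed
    define g where "g = (\<lambda>y. if y = n then c else y)"
    have sub: "subseq (B @ [1] @ [n] @ D) ((A' @ B) @ [1] @ (c # C0) @ D)"
    proof -
      have "subseq [n] (c # C0)" using nC by (simp add: subseq_singleton_left)
      moreover have "subseq B (A' @ B)" by (rule list_emb_append2) simp
      ultimately show ?thesis by (intro list_emb_append_mono) auto
    qed
    have av1: "av (B @ [1] @ [n] @ D)" by (rule av_sub[OF sub]) (use h(4) \<sigma>e in simp)
    have "av (map g (B @ [1] @ [n] @ D))"
    proof (rule av_map[OF _ av1])
      fix x y assume "x \<in> set (B @ [1] @ [n] @ D)" "y \<in> set (B @ [1] @ [n] @ D)" "x < y"
      then show "g x < g y" unfolding g_def using Bv Dv cn c2 by auto
    qed
    moreover have "map g (B @ [1] @ [n] @ D) = B @ 1 # c # D"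
    proof -
      have "map g B = B" unfolding g_def using Bv cn by (intro map_idI) auto
      moreover have "map g D = D" unfolding g_def using Dv cn by (intro map_idI) auto
      ultimately show ?thesis unfolding g_def using c2 cn by simp
    qed
    ultimately have av2: "av (B @ 1 # c # D)" by simp
    have p1: "pos (B @ 1 # c # D) 1 = length B" by (rule pos_first) (use Bv in auto)
    have pc: "pos ((B @ [1]) @ c # D) c = length (B @ [1])" by (rule pos_first) (use Bv c2 in auto)
    show ?thesis unfolding Sprec_def perms_def using d st av2 p1 pc by (simp add: avoids_av)
  qed
  have injh: "inj_on hh {c..}" unfolding inj_on_def hh_def using c2 by auto
  have beta_e: "A @ 1 # C = map hh (A' @ c # C0)" unfolding A_def C_def hh_def using c2 by simp
  have setAC: "set (A' @ c # C0) = {c..n}"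
  proof
    show "set (A' @ c # C0) \<subseteq> {c..n}" using Av Cv cn by auto
    show "{c..n} \<subseteq> set (A' @ c # C0)"
    proof
      fix y assume y: "y \<in> {c..n}"
      then have "y \<in> set (A' @ B @ 1 # c # C0 @ D)" unfolding setall using c2 by auto
      moreover have "y \<notin> set B" "y \<notin> set D" "y \<noteq> 1" using y Bv Dv c2 by auto
      ultimately show "y \<in> set (A' @ c # C0)" by auto
    qed
  qed
  have dAC: "distinct (A' @ c # C0)" using ds2 by auto
  have injh': "inj_on hh (set (A' @ c # C0))" using injh setAC by (simp add: inj_on_subset)
  have pb1: "pos (A @ 1 # C) 1 = length A'"
  proof -
    have "pos (A @ 1 # C) 1 = length A" by (rule pos_first) (use Av c2 in \<open>auto simp: A_def hh_def\<close>)
    then show ?thesis unfolding A_def by simp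
  qed
  have pC0: "pos (A' @ c # C0) n = length A' + 1 + pos C0 n"
  proof -
    have "pos ((A' @ [c]) @ C0) n = length (A' @ [c]) + pos C0 n"
      by (rule pos_app) (use dAC nC in auto)
    then show ?thesis by simp
  qed
  have pbn: "pos (A @ 1 # C) (n - c + 1) = length A' + 1 + pos C0 n"
  proof -
    have "n - c + 1 = hh n" unfolding hh_def using cn c2 by simp
    then have "pos (A @ 1 # C) (n - c + 1) = pos (map hh (A' @ c # C0)) (hh n)" unfolding beta_e by simp
    also have "\<dots> = pos (A' @ c # C0) n" by (rule pos_map[OF injh' dAC]) (use nC in simp)
    finally show ?thesis using pC0 by simp
  qed
  have psn: "pos \<sigma> n = length A' + length B + 2 + pos C0 n"
  proof -
    have d2: "distinct ((A' @ B @ [1, c]) @ (C0 @ D))" using ds2 by simp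
    have "pos ((A' @ B @ [1, c]) @ (C0 @ D)) n = length (A' @ B @ [1, c]) + pos (C0 @ D) n"
      by (rule pos_app[OF d2]) (use nC in simp)
    also have "pos (C0 @ D) n = pos C0 n" by (rule pos_app_left) (use d2 nC in auto)
    finally show ?thesis unfolding \<sigma>e by simp
  qed
  have ps1: "pos \<sigma> 1 = length A' + length B"
  proof -
    have "pos ((A' @ B) @ 1 # c # C0 @ D) 1 = length (A' @ B)" by (rule pos_first) (use Av Bv c2 in auto)
    then show ?thesis unfolding \<sigma>e by simp
  qed
  have kpos: "k = 2 + pos C0 n" using h(5) psn ps1 by arith
  have beta: "A @ 1 # C \<in> Sprec 1 (n - c + 1) (k - 1)"
  proof -
    have d: "distinct (A @ 1 # C)" unfolding beta_e distinct_map using dAC injh' by (rule conjI)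
    have "set (A @ 1 # C) = hh ` {c..n}" unfolding beta_e set_map setAC by (rule refl)
    also have "hh ` {c..n} = {1..n - c + 1}"
    proof
      show "hh ` {c..n} \<subseteq> {1..n - c + 1}" unfolding hh_def using c2 by auto
      show "{1..n - c + 1} \<subseteq> hh ` {c..n}"
      proof
        fix y assume y: "y \<in> {1..n - c + 1}"
        then have "y = hh (y + (c - 1))" "y + (c - 1) \<in> {c..n}" unfolding hh_def using c2 cn by auto
        then show "y \<in> hh ` {c..n}" by (rule image_eqI)
      qed
    qed
    finally have st: "set (A @ 1 # C) = {1..n - c + 1}" .
    have sub: "subseq (A' @ c # C0) (A' @ (B @ [1]) @ (c # C0) @ D)"
    proof -
      have "subseq (c # C0) ((B @ [1]) @ (c # C0) @ D)"
        by (rule list_emb_append2) (simp add: subseq_rev_drop_many)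
      then show ?thesis by (rule list_emb_append_mono[OF subseq_order.refl])
    qed
    have "av (A' @ c # C0)" by (rule av_sub[OF sub]) (use h(4) \<sigma>e in simp)
    then have "av (map hh (A' @ c # C0))"
      by (rule av_map[rotated]) (use Av Cv c2 in \<open>auto simp: hh_def\<close>)
    then have av2: "av (A @ 1 # C)" unfolding beta_e .
    show ?thesis unfolding Sprec_def perms_def using d st av2 pb1 pbn kpos by (simp add: avoids_av)
  qed
  have cbound: "c \<le> n - k + 1"
  proof -
    note bb = sprecD[OF beta]
    have "n - c + 1 \<in> set (A @ 1 # C)" unfolding bb(2) by simp
    then have "pos (A @ 1 # C) (n - c + 1) < length (A @ 1 # C)" by (rule pos_nth[THEN conjunct1])
    then have "length A' + 1 + pos C0 n < n - c + 1" using pbn bb(3) by simp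
    then show ?thesis using kpos k2 cn by arith
  qed
  show ?thesis
    by (intro exI[of _ c] exI[of _ A] exI[of _ B] exI[of _ C] exI[of _ D])
      (use combe c2 cbound alpha beta in simp)
qed



definition Gm :: "nat \<times> nat list \<times> nat list \<Rightarrow> nat list" where
  "Gm x = (case x of (m, \<alpha>, \<beta>) \<Rightarrow> comb m (take (pos \<beta> 1) \<beta>) (take (pos \<alpha> 1) \<alpha>)
      (drop (Suc (pos \<beta> 1)) \<beta>) (drop (pos \<alpha> 1 + 2) \<alpha>))"

lemma dec_alpha:
  assumes "\<alpha> \<in> Sprec 1 m 1"
  shows "\<alpha> = take (pos \<alpha> 1) \<alpha> @ 1 # m # drop (pos \<alpha> 1 + 2) \<alpha>"
proof -
  note h = sprecD[OF assms]
  have m1: "1 \<le> m"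
  proof (rule ccontr)
    assume "\<not> 1 \<le> m"
    then have "m = 0" by simp
    then have "\<alpha> = []" using h(3) by simp
    then have "pos \<alpha> m = pos \<alpha> 1" by (simp add: pos_def)
    then show False using h(5) by simp
  qed
  have i1: "1 \<in> set \<alpha>" and im: "m \<in> set \<alpha>" using h(2) m1 by auto
  define p where "p = pos \<alpha> 1"
  have pp: "p < length \<alpha>" "\<alpha> ! p = 1" using pos_nth[OF i1] unfolding p_def by auto
  have qq: "pos \<alpha> m < length \<alpha>" "\<alpha> ! pos \<alpha> m = m" using pos_nth[OF im] by auto
  have q: "pos \<alpha> m = Suc p" using h(5) unfolding p_def by arith
  have "\<alpha> = take p \<alpha> @ drop p \<alpha>" by simp
  also have "drop p \<alpha> = \<alpha> ! p # drop (Suc p) \<alpha>" using pp Cons_nth_drop_Suc[of p \<alpha>] by simp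
  also have "drop (Suc p) \<alpha> = \<alpha> ! Suc p # drop (Suc (Suc p)) \<alpha>"
    using qq q Cons_nth_drop_Suc[of "Suc p" \<alpha>] by simp
  finally show ?thesis using pp qq q unfolding p_def by simp
qed

lemma dec_beta:
  assumes "\<beta> \<in> Sprec 1 n' k'" "1 \<le> n'"
  shows "\<beta> = take (pos \<beta> 1) \<beta> @ 1 # drop (Suc (pos \<beta> 1)) \<beta>"
proof -
  note h = sprecD[OF assms(1)]
  have i1: "1 \<in> set \<beta>" using h(2) assms(2) by auto
  have pp: "pos \<beta> 1 < length \<beta>" "\<beta> ! pos \<beta> 1 = 1" using pos_nth[OF i1] by auto
  have "\<beta> = take (pos \<beta> 1) \<beta> @ drop (pos \<beta> 1) \<beta>" by simp
  also have "drop (pos \<beta> 1) \<beta> = \<beta> ! pos \<beta> 1 # drop (Suc (pos \<beta> 1)) \<beta>"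
    using pp Cons_nth_drop_Suc[of "pos \<beta> 1" \<beta>] by simp
  finally show ?thesis using pp by simp
qed

lemma Gm_comb:
  assumes "distinct (B @ 1 # m # D)" "distinct (A @ 1 # C)"
  shows "Gm (m, B @ 1 # m # D, A @ 1 # C) = comb m A B C D"
proof -
  have "pos (B @ 1 # m # D) 1 = length B" by (rule pos_first) (use assms in auto)
  moreover have "pos (A @ 1 # C) 1 = length A" by (rule pos_first) (use assms in auto)
  ultimately show ?thesis unfolding Gm_def by simp
qed

lemma finite_Sprec: "finite (Sprec a n k)"
proof (rule finite_subset)
  show "Sprec a n k \<subseteq> {xs. set xs \<subseteq> {1..n} \<and> length xs = n}"
    unfolding Sprec_def using perms_length by (auto simp: perms_def)
  show "finite {xs. set xs \<subseteq> {1..n} \<and> length xs = n}" by (rule finite_lists_length_eq) simp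
qed

lemma count_rec:
  fixes n k :: nat
  assumes k2: "2 \<le> k"
  shows "acnt n k = (\<Sum>m = 2..n - k + 1. acnt m 1 * acnt (n - m + 1) (k - 1))"
proof -
  define \<Sigma> where "\<Sigma> = (SIGMA m:{2..n - k + 1}. Sprec 1 m 1 \<times> Sprec 1 (n - m + 1) (k - 1))"
  have GF: "Gm x \<in> Sprec 1 n k \<and> Fm n (Gm x) = x" if x: "x \<in> \<Sigma>" for x
  proof -
    obtain m \<alpha> \<beta> where xe: "x = (m, \<alpha>, \<beta>)" by (cases x) auto
    have m: "2 \<le> m" "m \<le> n - k + 1" and ha: "\<alpha> \<in> Sprec 1 m 1"
      and hb: "\<beta> \<in> Sprec 1 (n - m + 1) (k - 1)" using x unfolding \<Sigma>_def xe by auto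
    define B where "B = take (pos \<alpha> 1) \<alpha>"
    define D where "D = drop (pos \<alpha> 1 + 2) \<alpha>"
    define A where "A = take (pos \<beta> 1) \<beta>"
    define C where "C = drop (Suc (pos \<beta> 1)) \<beta>"
    have ae: "\<alpha> = B @ 1 # m # D" unfolding B_def D_def by (rule dec_alpha[OF ha])
    have be: "\<beta> = A @ 1 # C" unfolding A_def C_def by (rule dec_beta[OF hb]) simp
    have g: "Gm x = comb m A B C D" unfolding xe Gm_def A_def B_def C_def D_def by simp
    have "comb m A B C D \<in> Sprec 1 n k \<and> Fm n (comb m A B C D) = (m, B @ 1 # m # D, A @ 1 # C)"
      by (rule comb_props[OF m(1) k2 m(2)]) (use ha hb ae be in simp_all)
    then have "Gm x \<in> Sprec 1 n k \<and> Fm n (Gm x) = (m, \<alpha>, \<beta>)" unfolding g ae[symmetric] be[symmetric] .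
    then show ?thesis using xe by simp
  qed
  have inj: "inj_on Gm \<Sigma>"
    by (rule inj_on_inverseI[where g = "Fm n"]) (use GF in blast)
  have img: "Gm ` \<Sigma> = Sprec 1 n k"
  proof
    show "Gm ` \<Sigma> \<subseteq> Sprec 1 n k" using GF by auto
    show "Sprec 1 n k \<subseteq> Gm ` \<Sigma>"
    proof
      fix \<sigma> assume hs: "\<sigma> \<in> Sprec 1 n k"
      obtain m A B C D where d: "\<sigma> = comb m A B C D \<and> m \<in> {2..n - k + 1} \<and>
           B @ 1 # m # D \<in> Sprec 1 m 1 \<and> A @ 1 # C \<in> Sprec 1 (n - m + 1) (k - 1)"
        using decomp[OF hs k2] by (elim exE)
      have "Gm (m, B @ 1 # m # D, A @ 1 # C) = \<sigma>"
        using Gm_comb[of B m D A C] d sprecD(1) by metis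
      moreover have "(m, B @ 1 # m # D, A @ 1 # C) \<in> \<Sigma>" unfolding \<Sigma>_def using d by simp
      ultimately show "\<sigma> \<in> Gm ` \<Sigma>" by (metis image_eqI)
    qed
  qed
  have "acnt n k = card \<Sigma>" unfolding acnt_def img[symmetric] by (rule card_image[OF inj])
  also have "\<dots> = (\<Sum>m = 2..n - k + 1. card (Sprec 1 m 1 \<times> Sprec 1 (n - m + 1) (k - 1)))"
    unfolding \<Sigma>_def by (rule card_SigmaI) (auto simp: finite_Sprec)
  also have "\<dots> = (\<Sum>m = 2..n - k + 1. acnt m 1 * acnt (n - m + 1) (k - 1))"
    unfolding acnt_def by (simp add: card_cartesian_product)
  finally show ?thesis .
qed



lemma Tser_nth: "fps_nth (Tser 1 k) n = (if k + 1 \<le> n then real (acnt n k) else 0)"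
  by (simp add: Tser_def acnt_def)

lemma Tser_nth': "fps_nth (Tser (Suc 0) k) n = (if k + 1 \<le> n then real (acnt n k) else 0)"
  using Tser_nth by simp

lemma fser_nth: "fps_nth fser m = (if 1 \<le> m then real (acnt (m + 1) 1) else 0)"
  by (simp add: fser_def)

lemma Tser_step:
  assumes k1: "1 \<le> k"
  shows "Tser 1 (Suc k) = fser * Tser 1 k"
proof (rule fps_ext)
  fix n
  have t: "fps_nth fser i * fps_nth (Tser 1 k) (n - i) =
      (if i \<in> {1..n - k - 1} then real (acnt (i + 1) 1 * acnt (n - i) k) else 0)" if "i \<in> {0..n}" for i
    using that by (auto simp: fser_nth Tser_nth Tser_nth')
  have "fps_nth (fser * Tser 1 k) n = (\<Sum>i = 0..n. fps_nth fser i * fps_nth (Tser 1 k) (n - i))" by (rule fps_mult_nth)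
  also have "\<dots> = (\<Sum>i = 0..n. (if i \<in> {1..n - k - 1} then real (acnt (i + 1) 1 * acnt (n - i) k) else 0))"
    by (rule sum.cong[OF refl t])
  also have "\<dots> = (\<Sum>i \<in> {0..n} \<inter> {1..n - k - 1}. real (acnt (i + 1) 1 * acnt (n - i) k))"
    by (rule sum.inter_restrict[symmetric]) simp
  also have "{0..n} \<inter> {1..n - k - 1} = {1..n - k - 1}" by auto
  finally have R: "fps_nth (fser * Tser 1 k) n = (\<Sum>i = 1..n - k - 1. real (acnt (i + 1) 1 * acnt (n - i) k))" .
  show "fps_nth (Tser 1 (Suc k)) n = fps_nth (fser * Tser 1 k) n"
  proof (cases "k + 2 \<le> n")
    case True
    have "acnt n (Suc k) = (\<Sum>m = 2..n - Suc k + 1. acnt m 1 * acnt (n - m + 1) (Suc k - 1))"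
      by (rule count_rec) (use k1 in simp)
    also have "\<dots> = (\<Sum>m = Suc 1..Suc (n - k - 1). acnt m 1 * acnt (n - m + 1) k)"
      using True by (intro sum.cong) auto
    also have "\<dots> = (\<Sum>i = 1..n - k - 1. acnt (Suc i) 1 * acnt (n - Suc i + 1) k)"
      by (rule sum.shift_bounds_cl_Suc_ivl)
    also have "\<dots> = (\<Sum>i = 1..n - k - 1. acnt (i + 1) 1 * acnt (n - i) k)"
      using True by (intro sum.cong) (auto simp: Suc_diff_Suc)
    finally have "real (acnt n (Suc k)) = (\<Sum>i = 1..n - k - 1. real (acnt (i + 1) 1 * acnt (n - i) k))"
      by (simp only: of_nat_sum)
    then show ?thesis unfolding R Tser_nth using True by simp
  next
    case False
    then have "{1..n - k - 1} = {}" by auto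
    then show ?thesis unfolding R Tser_nth using False by simp
  qed
qed

lemma Tser_formula: "1 \<le> k \<Longrightarrow> Tser 1 k = fps_X * fser ^ k"
proof (induction k rule: dec_induct)
  case base
  show ?case
  proof (rule fps_ext)
    fix n show "fps_nth (Tser 1 1) n = fps_nth (fps_X * fser ^ 1) n"
      by (cases n) (auto simp: Tser_nth Tser_nth' fser_nth)
  qed
next
  case (step k)
  then have "Tser 1 (Suc k) = fser * (fps_X * fser ^ k)" using Tser_step by simp
  then show ?case by (simp add: algebra_simps)
qed

lemma gser_formula:
  "gser 1 = fps_const (fps_X * fser) * fps_X * inverse (1 - fps_X * fps_const fser)"
proof -
  define Q :: "real fps fps" where "Q = 1 - fps_X * fps_const fser"
  define g where "g = gser 1"
  have gn: "fps_nth g k = (if 1 \<le> k then fps_X * fser ^ k else 0)" for k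
    unfolding g_def gser_def using Tser_formula by simp
  have gQ: "g * Q = fps_const (fps_X * fser) * fps_X"
  proof (rule fps_ext)
    fix k
    have "g * Q = g - fps_X * (g * fps_const fser)" unfolding Q_def by (simp add: algebra_simps)
    then have "fps_nth (g * Q) k = fps_nth g k - (if k = 0 then 0 else fps_nth g (k - 1) * fser)" by simp
    also have "\<dots> = fps_nth (fps_const (fps_X * fser) * fps_X) k"
    proof -
      consider "k = 0" | "k = 1" | "2 \<le> k" by arith
      then show ?thesis
      proof cases
        case 1 then show ?thesis by (simp add: gn)
      next
        case 2 then show ?thesis by (simp add: gn)
      next
        case 3
        then obtain j where j: "k = Suc (Suc j)" by (metis add_2_eq_Suc le_Suc_ex)
        show ?thesis unfolding j by (simp add: gn algebra_simps)
      qed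
    qed
    finally show "fps_nth (g * Q) k = fps_nth (fps_const (fps_X * fser) * fps_X) k" .
  qed
  have Q0: "fps_nth Q 0 = 1" unfolding Q_def by simp
  have QI: "Q * inverse Q = 1"
  proof -
    have "inverse Q = fps_right_inverse Q (inverse (fps_nth Q 0))" by (simp add: fps_inverse_def)
    also have "inverse (fps_nth Q 0) = 1" using Q0 by simp
    finally have "inverse Q = fps_right_inverse Q 1" .
    then show ?thesis using fps_right_inverse[of Q 1] Q0 by simp
  qed
  have "fps_const (fps_X * fser) * fps_X * inverse Q = g * Q * inverse Q" unfolding gQ by (rule refl)
  also have "\<dots> = g * (Q * inverse Q)" by (simp only: mult.assoc)
  also have "\<dots> = g" unfolding QI by simp
  finally show ?thesis unfolding Q_def g_def by (rule sym)
qed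


theorem theorem2p6:
  shows "(\<forall>n k. 3 \<le> n \<and> 2 \<le> k \<and> k \<le> n - 1 \<longrightarrow>
            acnt n k = (\<Sum>m = 2..n - k + 1. acnt m 1 * acnt (n - m + 1) (k - 1)))
       \<and> (\<forall>k \<ge> 1. Tser 1 k = fps_X * fser ^ k)
       \<and> gser 1 = fps_const (fps_X * fser) * fps_X * inverse (1 - fps_X * fps_const fser)"
proof (intro conjI allI impI)
  fix n k :: nat
  assume "3 \<le> n \<and> 2 \<le> k \<and> k \<le> n - 1"
  then show "acnt n k = (\<Sum>m = 2..n - k + 1. acnt m 1 * acnt (n - m + 1) (k - 1))"
    using count_rec by simp
next
  fix k :: nat
  assume "1 \<le> k"
  then show "Tser 1 k = fps_X * fser ^ k" by (rule Tser_formula)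
next
  show "gser 1 = fps_const (fps_X * fser) * fps_X * inverse (1 - fps_X * fps_const fser)"
    by (rule gser_formula)
qed

end
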